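(* Let $\mathcal{H}_\ell,\mathcal{H}_r$ be Hilbert spaces, $\mathcal{H}_S$ a finite-dimensional Hilbert space, $H_\ell,H_S,H_r$ self-adjoint operators on $\mathcal{H}_\ell,\mathcal{H}_S,\mathcal{H}_r$, and $\chi_\ell\in\mathcal{H}_\ell$, $\chi_r\in\mathcal{H}_r$, $\delta_\ell,\delta_r\in\mathcal{H}_S$ non-zero vectors. On $\mathcal{H}=\mathcal{H}_\ell\oplus\mathcal{H}_S\oplus\mathcal{H}_r$ let $H_0=H_\ell+H_S+H_r$ and $H_{\lambda,\nu}=H_0+\lambda[(\chi_\ell,\cdot)\delta_\ell+(\delta_\ell,\cdot)\chi_\ell]+\nu[(\chi_r,\cdot)\delta_r+(\delta_r,\cdot)\chi_r]$ for $\lambda,\nu\in\mathbb{R}$. Then for $z\in\mathbb{C}\setminus\mathbb{R}$, $$G_{\lambda,\nu}(\delta_\ell,\delta_\ell,z)=\frac{1}{D(z)}\Big[\big(1-\nu^2G_0(\chi_r,\chi_r,z)G_0(\delta_r,\delta_r,z)\big)G_0(\delta_\ell,\delta_\ell,z)+\nu^2G_0(\chi_r,\chi_r,z)G_0(\delta_\ell,\delta_r,z)G_0(\delta_r,\delta_\ell,z)\Big],$$ $$G_{\lambda,\nu}(\chi_\ell,\chi_\ell,z)=\frac{1}{D(z)}\Big[G_0(\chi_\ell,\chi_\ell,z)\big(1-\nu^2G_0(\chi_r,\chi_r,z)G_0(\delta_r,\delta_r,z)\big)\Big],$$ where $$D(z)=\big(1-\nu^2G_0(\chi_r,\chi_r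,z)G_0(\delta_r,\delta_r,z)\big)\big(1-\lambda^2G_0(\chi_\ell,\chi_\ell,z)G_0(\delta_\ell,\delta_\ell,z)\big)-\nu^2\lambda^2G_0(\chi_r,\chi_r,z)G_0(\chi_\ell,\chi_\ell,z)G_0(\delta_\ell,\delta_r,z)G_0(\delta_r,\delta_\ell,z).$$
   Context: For $\varphi,\psi\in\mathcal{H}$ and $z\in\mathbb{C}\setminus\mathbb{R}$, $G_{\lambda,\nu}(\varphi,\psi,z)=(\varphi,(H_{\lambda,\nu}-z)^{-1}\psi)$ and $G_0=G_{0,0}$ (the resolvent of $H_0$); the inner product is linear in the second argument. *)

theory Defs
  imports Complex_Main "HOL-Library.Product_Plus"
begin

class cvector = ab_group_add +
  fixes scaleC :: "complex \<Rightarrow> 'a \<Rightarrow> 'a" (infixr \<open>*\<^sub>C\<close> 75)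
  assumes scaleC_add_right: "a *\<^sub>C (x + y) = a *\<^sub>C x + a *\<^sub>C y"
    and scaleC_add_left: "(a + b) *\<^sub>C x = a *\<^sub>C x + b *\<^sub>C x"
    and scaleC_scaleC: "a *\<^sub>C (b *\<^sub>C x) = (a * b) *\<^sub>C x"
    and scaleC_one: "1 *\<^sub>C x = x"

text \<open>Inner product: conjugate-linear in the first, linear in the second argument.\<close>
class cinner_space = cvector +
  fixes cinner :: "'a \<Rightarrow> 'a \<Rightarrow> complex"
  assumes cinner_conj_sym: "cinner x y = cnj (cinner y x)"
    and cinner_add_right: "cinner x (y + z) = cinner x y + cinner x z"
    and cinner_scaleC_right: "cinner x (a *\<^sub>C y) = a * cinner x y"
    and cinner_pos: "0 \<le> Re (cinner x x)"
    and cinner_eq_zero_iff: "cinner x x = 0 \<longleftrightarrow> x = 0"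

definition cnorm :: "'a::cinner_space \<Rightarrow> real" where
  "cnorm x = sqrt (Re (cinner x x))"

class chilbert = cinner_space +
  assumes cauchy_complete:
    "(\<forall>e::real>0. \<exists>N::nat. \<forall>m\<ge>N. \<forall>n\<ge>N. sqrt (Re (cinner (X m - X n) (X m - X n))) < e) \<Longrightarrow>
       \<exists>L. \<forall>e::real>0. \<exists>N::nat. \<forall>n\<ge>N. sqrt (Re (cinner (X n - L) (X n - L))) < e"

definition finite_dimensional :: "'a::cvector itself \<Rightarrow> bool" where
  "finite_dimensional (_ :: 'a itself) \<longleftrightarrow>
     (\<exists>B :: 'a set. finite B \<and> (\<forall>x. \<exists>c. x = (\<Sum>b\<in>B. c b *\<^sub>C b)))"

instantiation prod :: (cvector, cvector) cvector
begin
definition scaleC_prod_def: "a *\<^sub>C x = (a *\<^sub>C fst x, a *\<^sub>C snd x)"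
instance
proof
  fix a b :: complex and x y :: "'a \<times> 'b"
  show "a *\<^sub>C (x + y) = a *\<^sub>C x + a *\<^sub>C y" by (simp add: scaleC_prod_def scaleC_add_right)
  show "(a + b) *\<^sub>C x = a *\<^sub>C x + b *\<^sub>C x" by (simp add: scaleC_prod_def scaleC_add_left)
  show "a *\<^sub>C (b *\<^sub>C x) = (a * b) *\<^sub>C x" by (simp add: scaleC_prod_def scaleC_scaleC)
  show "1 *\<^sub>C x = x" by (simp add: scaleC_prod_def scaleC_one)
qed
end

instantiation prod :: (cinner_space, cinner_space) cinner_space
begin
definition cinner_prod_def: "cinner x y = cinner (fst x) (fst y) + cinner (snd x) (snd y)"
instance
proof
  fix x y z :: "'a \<times> 'b" and a :: complex
  show "cinner x y = cnj (cinner y x)"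
    by (simp only: cinner_prod_def complex_cnj_add cinner_conj_sym[of "fst x" "fst y"]
        cinner_conj_sym[of "snd x" "snd y"])
  show "cinner x (y + z) = cinner x y + cinner x z"
    by (simp only: cinner_prod_def fst_add snd_add cinner_add_right add_ac)
  show "cinner x (a *\<^sub>C y) = a * cinner x y"
    by (simp only: cinner_prod_def scaleC_prod_def fst_conv snd_conv cinner_scaleC_right distrib_left)
  show "0 \<le> Re (cinner x x)"
    using cinner_pos[of "fst x"] cinner_pos[of "snd x"] by (simp add: cinner_prod_def)
  have im0: "Im c = 0" if "c = cnj c" for c :: complex
    using arg_cong[OF that, of Im] by simp
  have i1: "Im (cinner (fst x) (fst x)) = 0"
    by (rule im0) (rule cinner_conj_sym)
  have i2: "Im (cinner (snd x) (snd x)) = 0"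
    by (rule im0) (rule cinner_conj_sym)
  show "cinner x x = 0 \<longleftrightarrow> x = 0"
  proof
    assume h: "cinner x x = 0"
    have "Re (cinner (fst x) (fst x)) = 0" "Re (cinner (snd x) (snd x)) = 0"
      using h cinner_pos[of "fst x"] cinner_pos[of "snd x"]
      by (simp_all add: cinner_prod_def complex_eq_iff)
    then have "cinner (fst x) (fst x) = 0" "cinner (snd x) (snd x) = 0"
      using i1 i2 by (simp_all add: complex_eq_iff)
    then show "x = 0" by (simp add: cinner_eq_zero_iff prod_eq_iff)
  next
    assume "x = 0"
    moreover have "cinner (0::'a) 0 = 0" "cinner (0::'b) 0 = 0"
      by (simp_all only: cinner_eq_zero_iff)
    ultimately show "cinner x x = 0" by (simp add: cinner_prod_def)
  qed
qed
end

text \<open>An operator is given by its domain D and its action A (relevant only on D).\<close>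

definition csubspace :: "'a::cvector set \<Rightarrow> bool" where
  "csubspace D \<longleftrightarrow> 0 \<in> D \<and> (\<forall>x\<in>D. \<forall>y\<in>D. x + y \<in> D) \<and> (\<forall>a. \<forall>x\<in>D. a *\<^sub>C x \<in> D)"

definition clinear_on :: "'a::cvector set \<Rightarrow> ('a \<Rightarrow> 'b::cvector) \<Rightarrow> bool" where
  "clinear_on D A \<longleftrightarrow> (\<forall>x\<in>D. \<forall>y\<in>D. A (x + y) = A x + A y) \<and> (\<forall>a. \<forall>x\<in>D. A (a *\<^sub>C x) = a *\<^sub>C A x)"

definition dense_set :: "'a::cinner_space set \<Rightarrow> bool" where
  "dense_set D \<longleftrightarrow> (\<forall>x. \<forall>e::real>0. \<exists>y\<in>D. cnorm (x - y) < e)"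

definition adjoint_domain :: "'a::cinner_space set \<Rightarrow> ('a \<Rightarrow> 'a) \<Rightarrow> 'a set" where
  "adjoint_domain D A = {\<psi>. \<exists>\<eta>. \<forall>\<phi>\<in>D. cinner \<psi> (A \<phi>) = cinner \<eta> \<phi>}"

text \<open>Self-adjoint: densely defined linear operator with A* = A, i.e. A is symmetric and
  the domain of A* is contained in the domain of A.\<close>
definition self_adjoint :: "'a::cinner_space set \<Rightarrow> ('a \<Rightarrow> 'a) \<Rightarrow> bool" where
  "self_adjoint D A \<longleftrightarrow> csubspace D \<and> clinear_on D A \<and> dense_set D \<and>
     (\<forall>\<phi>\<in>D. \<forall>\<psi>\<in>D. cinner \<phi> (A \<psi>) = cinner (A \<phi>) \<psi>) \<and>
     adjoint_domain D A \<subseteq> D"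

definition resolvent :: "'a::cvector set \<Rightarrow> ('a \<Rightarrow> 'a) \<Rightarrow> complex \<Rightarrow> 'a \<Rightarrow> 'a" where
  "resolvent D A z \<psi> = (THE \<phi>. \<phi> \<in> D \<and> A \<phi> - z *\<^sub>C \<phi> = \<psi>)"

definition green :: "'a::cinner_space set \<Rightarrow> ('a \<Rightarrow> 'a) \<Rightarrow> 'a \<Rightarrow> 'a \<Rightarrow> complex \<Rightarrow> complex" where
  "green D A \<phi> \<psi> z = cinner \<phi> (resolvent D A z \<psi>)"

definition inl3 :: "'l \<Rightarrow> 'l \<times> 's::zero \<times> 'r::zero" where "inl3 x = (x, 0, 0)"
definition ins3 :: "'s \<Rightarrow> 'l::zero \<times> 's \<times> 'r::zero" where "ins3 x = (0, x, 0)"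
definition inr3 :: "'r \<Rightarrow> 'l::zero \<times> 's::zero \<times> 'r" where "inr3 x = (0, 0, x)"

definition dom0 :: "'l set \<Rightarrow> 's set \<Rightarrow> 'r set \<Rightarrow> ('l \<times> 's \<times> 'r) set" where
  "dom0 Dl DS Dr = Dl \<times> DS \<times> Dr"

definition H0op :: "('l \<Rightarrow> 'l) \<Rightarrow> ('s \<Rightarrow> 's) \<Rightarrow> ('r \<Rightarrow> 'r) \<Rightarrow> 'l \<times> 's \<times> 'r \<Rightarrow> 'l \<times> 's \<times> 'r" where
  "H0op Hl HS Hr x = (Hl (fst x), HS (fst (snd x)), Hr (snd (snd x)))"

definition Hlamnu ::
  "('l::cinner_space \<Rightarrow> 'l) \<Rightarrow> ('s::cinner_space \<Rightarrow> 's) \<Rightarrow> ('r::cinner_space \<Rightarrow> 'r) \<Rightarrow>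
   'l \<Rightarrow> 'r \<Rightarrow> 's \<Rightarrow> 's \<Rightarrow> real \<Rightarrow> real \<Rightarrow> 'l \<times> 's \<times> 'r \<Rightarrow> 'l \<times> 's \<times> 'r" where
  "Hlamnu Hl HS Hr \<chi>l \<chi>r \<delta>l \<delta>r lam nu x =
     H0op Hl HS Hr x
     + complex_of_real lam *\<^sub>C (cinner (inl3 \<chi>l) x *\<^sub>C ins3 \<delta>l + cinner (ins3 \<delta>l) x *\<^sub>C inl3 \<chi>l)
     + complex_of_real nu *\<^sub>C (cinner (inr3 \<chi>r) x *\<^sub>C ins3 \<delta>r + cinner (ins3 \<delta>r) x *\<^sub>C inr3 \<chi>r)"

end

theory Submission
  imports Defs
begin

lemma scaleC_zero_left[simp]: "(0::complex) *\<^sub>C (x::'a::cvector) = 0"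
proof -
  have "0 *\<^sub>C x + 0 *\<^sub>C x = 0 *\<^sub>C x + (0::'a)" using scaleC_add_left[of 0 0 x] by simp
  then show ?thesis by simp
qed

lemma scaleC_zero_right[simp]: "a *\<^sub>C (0::'a::cvector) = 0"
proof -
  have "a *\<^sub>C 0 + a *\<^sub>C 0 = a *\<^sub>C 0 + (0::'a)" using scaleC_add_right[of a 0 0] by simp
  then show ?thesis by simp
qed

lemma scaleC_minus_left: "(- a) *\<^sub>C (x::'a::cvector) = - (a *\<^sub>C x)"
  using scaleC_add_left[of a "-a" x] by (simp add: eq_neg_iff_add_eq_0 add.commute)

lemma scaleC_minus_right: "a *\<^sub>C (- x::'a::cvector) = - (a *\<^sub>C x)"
  using scaleC_add_right[of a x "-x"] by (simp add: eq_neg_iff_add_eq_0 add.commute)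

lemma scaleC_diff_left: "(a - b) *\<^sub>C (x::'a::cvector) = a *\<^sub>C x - b *\<^sub>C x"
  using scaleC_add_left[of a "-b" x] by (simp add: scaleC_minus_left)

lemma scaleC_diff_right: "a *\<^sub>C (x - y::'a::cvector) = a *\<^sub>C x - a *\<^sub>C y"
  using scaleC_add_right[of a x "-y"] by (simp add: scaleC_minus_right)

lemma cinner_add_left: "cinner (x + y::'a::cinner_space) z = cinner x z + cinner y z"
  by (metis cinner_add_right cinner_conj_sym complex_cnj_add)

lemma cinner_scaleC_left: "cinner (a *\<^sub>C x::'a::cinner_space) y = cnj a * cinner x y"
  by (metis cinner_scaleC_right cinner_conj_sym complex_cnj_mult)

lemma cinner_zero_left[simp]: "cinner (0::'a::cinner_space) y = 0"
  using cinner_add_left[of "0::'a" 0 y] by simp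

lemma cinner_zero_right[simp]: "cinner (y::'a::cinner_space) 0 = 0"
  using cinner_add_right[of y "0::'a" 0] by simp

lemma cinner_minus_left: "cinner (- x::'a::cinner_space) y = - cinner x y"
  using cinner_add_left[of x "-x" y] by (simp add: eq_neg_iff_add_eq_0 add.commute)

lemma cinner_minus_right: "cinner (y::'a::cinner_space) (- x) = - cinner y x"
  using cinner_add_right[of y x "-x"] by (simp add: eq_neg_iff_add_eq_0 add.commute)

lemma cinner_diff_left: "cinner (x - y::'a::cinner_space) z = cinner x z - cinner y z"
  using cinner_add_left[of x "-y" z] by (simp add: cinner_minus_left)

lemma cinner_diff_right: "cinner (z::'a::cinner_space) (x - y) = cinner z x - cinner z y"
  using cinner_add_right[of z x "-y"] by (simp add: cinner_minus_right)

lemma cinner_self_Im: "Im (cinner (x::'a::cinner_space) x) = 0"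
  using arg_cong[OF cinner_conj_sym[of x x], of Im] by simp

lemma cinner_self_real: "cinner (x::'a::cinner_space) x = complex_of_real (Re (cinner x x))"
  using cinner_self_Im[of x] by (simp add: complex_eq_iff)

lemma Re_cinner_swap: "Re (cinner (y::'a::cinner_space) x) = Re (cinner x y)"
  by (subst cinner_conj_sym) simp

lemmas cinner_simps = cinner_add_left cinner_add_right cinner_scaleC_left cinner_scaleC_right
  cinner_diff_left cinner_diff_right cinner_minus_left cinner_minus_right

abbreviation NN :: "'a::cinner_space \<Rightarrow> real" where "NN x \<equiv> Re (cinner x x)"

lemma NN_zero_iff: "NN (x::'a::cinner_space) = 0 \<longleftrightarrow> x = 0"
  by (metis cinner_eq_zero_iff cinner_self_real cinner_zero_left of_real_0 zero_complex.simps(1))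

lemma NN_add: "NN (x + y::'a::cinner_space) = NN x + NN y + 2 * Re (cinner x y)"
  using Re_cinner_swap[of y x] by (simp add: cinner_simps)

lemma NN_diff: "NN (x - y::'a::cinner_space) = NN x + NN y - 2 * Re (cinner x y)"
  using Re_cinner_swap[of y x] by (simp add: cinner_simps)

lemma cmod_sq_c: "(complex_of_real (cmod c))^2 = c * cnj c" "(complex_of_real (cmod c))^2 = cnj c * c"
  by (metis complex_norm_square of_real_power, metis complex_norm_square of_real_power mult.commute)

lemma NN_scale: "NN (a *\<^sub>C x::'a::cinner_space) = (cmod a)^2 * NN x"
proof -
  have "cinner (a *\<^sub>C x) (a *\<^sub>C x) = (cnj a * a) * cinner x x" by (simp add: cinner_simps)
  also have "cnj a * a = complex_of_real ((cmod a)^2)" by (simp add: cmod_sq_c)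
  finally show ?thesis by (subst (asm) cinner_self_real) (simp only: of_real_mult[symmetric] Re_complex_of_real)
qed

lemma cauchy_schwarz: "(cmod (cinner (x::'a::cinner_space) y))^2 \<le> NN x * NN y"
proof (cases "x = 0")
  case True then show ?thesis by simp
next
  case False
  define c where "c = cinner x y"
  define n where "n = NN x"
  have n: "n > 0" using False NN_zero_iff cinner_pos unfolding n_def
    by (metis less_eq_real_def)
  have e: "cinner (complex_of_real n *\<^sub>C y - c *\<^sub>C x) (complex_of_real n *\<^sub>C y - c *\<^sub>C x)
     = complex_of_real (n*n) * cinner y y - complex_of_real n * (cmod c)^2"
  proof -
    have cy: "cinner y x = cnj c" unfolding c_def by (rule cinner_conj_sym)
    have cx: "cinner x x = complex_of_real n" unfolding n_def by (rule cinner_self_real)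
    show ?thesis by (simp add: cinner_simps cy cx c_def[symmetric] algebra_simps cmod_sq_c)
  qed
  have "0 \<le> Re (cinner (complex_of_real n *\<^sub>C y - c *\<^sub>C x) (complex_of_real n *\<^sub>C y - c *\<^sub>C x))"
    by (rule cinner_pos)
  then have "0 \<le> n * n * NN y - n * (cmod c)^2" by (simp only: e) simp
  then have "n * (cmod c)^2 \<le> n * (n * NN y)" by (simp add: algebra_simps)
  then have "(cmod c)^2 \<le> n * NN y" using n by simp
  then show ?thesis by (simp add: c_def n_def)
qed

lemma cnorm_nonneg: "0 \<le> cnorm x" using cinner_pos[of x] by (simp add: cnorm_def)

lemma cnorm_sq: "(cnorm (x::'a::cinner_space))^2 = NN x"
  using cinner_pos[of x] by (simp add: cnorm_def)

lemma cinner_le: "cmod (cinner (x::'a::cinner_space) y) \<le> cnorm x * cnorm y"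
proof -
  have "(cmod (cinner x y))^2 \<le> (cnorm x * cnorm y)^2"
    using cauchy_schwarz[of x y] by (simp add: power_mult_distrib cnorm_sq)
  then show ?thesis using cnorm_nonneg[of x] cnorm_nonneg[of y]
    by (meson mult_nonneg_nonneg power2_le_imp_le)
qed

lemma cnorm_triangle: "cnorm (x + y::'a::cinner_space) \<le> cnorm x + cnorm y"
proof -
  have "Re (cinner x y) \<le> cnorm x * cnorm y"
    using cinner_le[of x y] complex_Re_le_cmod order_trans by blast
  then have "(cnorm (x+y))^2 \<le> (cnorm x + cnorm y)^2"
    by (simp add: cnorm_sq NN_add power2_sum)
  then show ?thesis using cnorm_nonneg[of x] cnorm_nonneg[of y]
    by (meson add_nonneg_nonneg power2_le_imp_le)
qed

lemma cnorm_scale: "cnorm (a *\<^sub>C x::'a::cinner_space) = cmod a * cnorm x"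
  by (simp add: cnorm_def NN_scale real_sqrt_mult)

lemma cnorm_zero_iff: "cnorm (x::'a::cinner_space) = 0 \<longleftrightarrow> x = 0"
  by (simp add: cnorm_def NN_zero_iff cinner_pos)

lemma cnorm_minus_commute: "cnorm (x - y::'a::cinner_space) = cnorm (y - x)"
proof -
  have "y - x = (-1) *\<^sub>C (x - y)" by (simp add: scaleC_minus_left scaleC_one)
  then show ?thesis by (simp add: cnorm_scale)
qed


lemma Lim_null_comparison:
  "(\<And>n. norm (f n) \<le> g n) \<Longrightarrow> (g \<longlonglongrightarrow> (0::real)) \<Longrightarrow> (f \<longlonglongrightarrow> 0)"
  apply (erule tendsto_0_le[where K=1])
  apply (rule always_eventually) by (metis mult_1_right order_trans real_norm_def abs_ge_self)

definition conv :: "(nat \<Rightarrow> 'a::cinner_space) \<Rightarrow> 'a \<Rightarrow> bool" where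
  "conv X L \<longleftrightarrow> (\<lambda>n. cnorm (X n - L)) \<longlonglongrightarrow> 0"

lemma complete_conv:
  fixes X :: "nat \<Rightarrow> 'a::chilbert"
  assumes "\<forall>e>0. \<exists>N. \<forall>m\<ge>N. \<forall>n\<ge>N. cnorm (X m - X n) < e"
  shows "\<exists>L. conv X L"
proof -
  from cauchy_complete[of X] assms obtain L where
    L: "\<forall>e::real>0. \<exists>N::nat. \<forall>n\<ge>N. sqrt (Re (cinner (X n - L) (X n - L))) < e"
    unfolding cnorm_def by blast
  have "conv X L" unfolding conv_def LIMSEQ_iff
    using L by (simp add: cnorm_def[symmetric] abs_of_nonneg cnorm_nonneg)
  then show ?thesis by blast
qed

lemma conv_le_null: "(\<And>n. cnorm (Y n - M) \<le> c * cnorm (X n - L)) \<Longrightarrow> conv X L \<Longrightarrow> conv Y M"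
  unfolding conv_def
  apply (rule Lim_null_comparison[where g="\<lambda>n. c * cnorm (X n - L)"])
   apply (simp add: cnorm_nonneg)
  using tendsto_mult_right_zero by blast

lemma conv_cinner: "conv X L \<Longrightarrow> (\<lambda>n. cinner y (X n)) \<longlonglongrightarrow> cinner y L"
  unfolding conv_def
  apply (rule LIM_zero_cancel)
  apply (rule Lim_null_comparison[where g="\<lambda>n. cnorm y * cnorm (X n - L)"])
   apply (simp add: cinner_diff_right[symmetric] cinner_le)
  using tendsto_mult_right_zero by blast

lemma conv_add: "conv X L \<Longrightarrow> conv Y M \<Longrightarrow> conv (\<lambda>n. X n + Y n) (L + M)"
  unfolding conv_def
  apply (rule Lim_null_comparison[where g="\<lambda>n. cnorm (X n - L) + cnorm (Y n - M)"])
   apply (simp add: cnorm_nonneg)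
   apply (metis add_diff_add cnorm_triangle)
  using tendsto_add_zero by blast

lemma conv_scale: "conv X L \<Longrightarrow> conv (\<lambda>n. a *\<^sub>C X n) (a *\<^sub>C L)"
  by (rule conv_le_null[where c="cmod a"]) (simp_all add: scaleC_diff_right[symmetric] cnorm_scale)

lemma conv_cong: "conv X L \<Longrightarrow> (\<And>n. Y n = X n) \<Longrightarrow> conv Y L"
  by (simp add: conv_def)

lemma orth_dense:
  assumes "dense_set D" "\<And>\<phi>. \<phi> \<in> D \<Longrightarrow> cinner x \<phi> = 0"
  shows "x = 0"
proof (rule ccontr)
  assume "x \<noteq> 0"
  then have p: "cnorm x > 0" using cnorm_zero_iff cnorm_nonneg by (metis less_eq_real_def)
  obtain y where y: "y \<in> D" "cnorm (x - y) < cnorm x / 2"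
    using assms(1) p unfolding dense_set_def by (meson half_gt_zero)
  have "NN x = Re (cinner x (x - y))" using assms(2)[OF y(1)] by (simp add: cinner_diff_right)
  also have "\<dots> \<le> cnorm x * cnorm (x - y)"
    using cinner_le complex_Re_le_cmod order_trans by blast
  also have "\<dots> \<le> cnorm x * (cnorm x / 2)" using y(2) p by simp
  finally have "(cnorm x)^2 \<le> cnorm x * (cnorm x / 2)" by (simp add: cnorm_sq)
  then show False using p by (simp add: power2_eq_square)
qed

lemma neg_one_scale: "(-1) *\<^sub>C (x::'a::cvector) = - x"
  by (simp add: scaleC_minus_left scaleC_one)

context
  fixes D :: "'a::cinner_space set" and A :: "'a \<Rightarrow> 'a"
  assumes sa: "self_adjoint D A"
begin

lemma sa_add: "x \<in> D \<Longrightarrow> y \<in> D \<Longrightarrow> x + y \<in> D \<and> A (x + y) = A x + A y"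
  using sa unfolding self_adjoint_def csubspace_def clinear_on_def by blast

lemma sa_scale: "x \<in> D \<Longrightarrow> a *\<^sub>C x \<in> D \<and> A (a *\<^sub>C x) = a *\<^sub>C A x"
  using sa unfolding self_adjoint_def csubspace_def clinear_on_def by blast

lemma sa_diff: "x \<in> D \<Longrightarrow> y \<in> D \<Longrightarrow> x - y \<in> D \<and> A (x - y) = A x - A y"
  using sa_add[of x "(-1) *\<^sub>C y"] sa_scale[of y "-1"] by (simp add: neg_one_scale)

lemma sa_zero: "0 \<in> D" using sa unfolding self_adjoint_def csubspace_def by blast

lemma sa_sym: "x \<in> D \<Longrightarrow> y \<in> D \<Longrightarrow> cinner x (A y) = cinner (A x) y"
  using sa unfolding self_adjoint_def by blast

lemma sa_dense: "dense_set D" using sa unfolding self_adjoint_def by blast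

lemma sa_adj: "(\<And>\<phi>. \<phi> \<in> D \<Longrightarrow> cinner \<psi> (A \<phi>) = cinner \<eta> \<phi>) \<Longrightarrow> \<psi> \<in> D"
  using sa unfolding self_adjoint_def adjoint_domain_def by blast

lemma sa_real: "x \<in> D \<Longrightarrow> Im (cinner x (A x)) = 0"
proof -
  assume x: "x \<in> D"
  have "cinner x (A x) = cnj (cinner x (A x))"
    using sa_sym[OF x x] cinner_conj_sym[of "A x" x] by simp
  from arg_cong[OF this, of Im] show ?thesis by simp
qed

lemma sa_closed:
  assumes f: "\<And>n. f n \<in> D" and c1: "conv f \<phi>" and c2: "conv (\<lambda>n. A (f n)) \<eta>"
  shows "\<phi> \<in> D \<and> A \<phi> = \<eta>"
proof -
  have key: "cinner \<phi> (A \<psi>) = cinner \<eta> \<psi>" if "\<psi> \<in> D" for \<psi>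
  proof -
    have t1: "(\<lambda>n. cnj (cinner (A \<psi>) (f n))) \<longlonglongrightarrow> cnj (cinner (A \<psi>) \<phi>)"
      by (intro tendsto_intros conv_cinner c1)
    have t2: "(\<lambda>n. cnj (cinner \<psi> (A (f n)))) \<longlonglongrightarrow> cnj (cinner \<psi> \<eta>)"
      by (intro tendsto_intros conv_cinner[OF c2])
    have "(\<lambda>n. cnj (cinner (A \<psi>) (f n))) = (\<lambda>n. cnj (cinner \<psi> (A (f n))))"
      using sa_sym[OF f that] by (metis cinner_conj_sym)
    then have "cnj (cinner (A \<psi>) \<phi>) = cnj (cinner \<psi> \<eta>)" using t1 t2 LIMSEQ_unique by metis
    then show ?thesis by (metis cinner_conj_sym)
  qed
  have pD: "\<phi> \<in> D" by (rule sa_adj[OF key])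
  have "A \<phi> - \<eta> = 0"
  proof (rule orth_dense[OF sa_dense])
    fix \<psi> assume "\<psi> \<in> D"
    then show "cinner (A \<phi> - \<eta>) \<psi> = 0"
      using key[of \<psi>] sa_sym[OF pD] by (simp add: cinner_diff_left)
  qed
  then show ?thesis using pD by simp
qed

end


lemma parallelogram: "NN (u - v::'a::cinner_space) + NN (u + v) = 2 * NN u + 2 * NN v"
  by (simp add: NN_add NN_diff)

lemma two_scale: "(2::complex) *\<^sub>C (x::'a::cvector) = x + x"
  using scaleC_add_left[of 1 1 x] by (simp add: scaleC_one)

lemma half_scale: "(2::complex) *\<^sub>C ((1/2) *\<^sub>C (x::'a::cvector)) = x"
  by (simp add: scaleC_scaleC scaleC_one)

context
  fixes D :: "'a::chilbert set" and A :: "'a \<Rightarrow> 'a" and z :: complex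
  assumes sa: "self_adjoint D A" and z: "Im z \<noteq> 0"
begin

definition T where "T \<phi> = A \<phi> - z *\<^sub>C \<phi>"

lemma T_add: "x \<in> D \<Longrightarrow> y \<in> D \<Longrightarrow> T (x + y) = T x + T y"
  using sa_add[OF sa] by (simp add: T_def scaleC_add_right algebra_simps)

lemma T_scale: "x \<in> D \<Longrightarrow> T (a *\<^sub>C x) = a *\<^sub>C T x"
  using sa_scale[OF sa] by (simp add: T_def scaleC_diff_right scaleC_scaleC mult.commute)

lemma T_diff: "x \<in> D \<Longrightarrow> y \<in> D \<Longrightarrow> T (x - y) = T x - T y"
  using sa_diff[OF sa] by (simp add: T_def scaleC_diff_right algebra_simps)

lemma T_lower: "x \<in> D \<Longrightarrow> \<bar>Im z\<bar> * cnorm x \<le> cnorm (T x)"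
proof -
  assume x: "x \<in> D"
  have "cinner x (T x) = cinner x (A x) - z * complex_of_real (NN x)"
    by (simp add: T_def cinner_simps cinner_self_real[of x, symmetric])
  then have "Im (cinner x (T x)) = - Im z * NN x"
    using sa_real[OF sa x] by simp
  then have "\<bar>Im z\<bar> * NN x \<le> cmod (cinner x (T x))"
    using abs_Im_le_cmod[of "cinner x (T x)"] cinner_pos[of x] by (simp add: abs_mult)
  also have "\<dots> \<le> cnorm x * cnorm (T x)" by (rule cinner_le)
  finally have h: "\<bar>Im z\<bar> * cnorm x * cnorm x \<le> cnorm (T x) * cnorm x"
    by (simp add: cnorm_sq[symmetric] power2_eq_square mult.commute mult.left_commute)
  show ?thesis
  proof (cases "cnorm x = 0")
    case True then show ?thesis by (simp add: cnorm_nonneg)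
  next
    case False then have "cnorm x > 0" using cnorm_nonneg by (metis less_eq_real_def)
    then show ?thesis using h by simp
  qed
qed

lemma T_inj: "x \<in> D \<Longrightarrow> y \<in> D \<Longrightarrow> T x = T y \<Longrightarrow> x = y"
proof -
  assume x: "x \<in> D" and y: "y \<in> D" and e: "T x = T y"
  have "\<bar>Im z\<bar> * cnorm (x - y) \<le> 0"
    using T_lower[of "x - y"] T_diff[OF x y] sa_diff[OF sa x y] e by (simp add: cnorm_def)
  then have "cnorm (x - y) \<le> 0" using z by (simp add: mult_le_0_iff)
  then have "cnorm (x - y) = 0" using cnorm_nonneg[of "x-y"] by linarith
  then show "x = y" by (simp add: cnorm_zero_iff)
qed

lemma T_surj: "\<exists>\<phi>\<in>D. T \<phi> = \<psi>"
proof -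
  define S where "S = (\<lambda>r. NN (\<psi> - r)) ` (T ` D)"
  define d where "d = Inf S"
  have S_ne: "S \<noteq> {}" using sa_zero[OF sa] unfolding S_def by blast
  have S_bdd: "bdd_below S" unfolding S_def using cinner_pos by (intro bdd_belowI[of _ 0]) auto
  have d_le: "d \<le> NN (\<psi> - T x)" if "x \<in> D" for x
    unfolding d_def using S_bdd that by (intro cInf_lower) (auto simp: S_def)
  have d_nonneg: "0 \<le> d" unfolding d_def using S_ne cinner_pos by (intro cInf_greatest) (auto simp: S_def)
  have "\<forall>n. \<exists>x. x \<in> D \<and> NN (\<psi> - T x) < d + inverse (real (Suc n))"
  proof
    fix n
    have "Inf S < d + inverse (real (Suc n))" unfolding d_def by simp
    then obtain s where "s \<in> S" "s < d + inverse (real (Suc n))"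
      using cInf_lessD[OF S_ne] by blast
    then show "\<exists>x. x \<in> D \<and> NN (\<psi> - T x) < d + inverse (real (Suc n))" unfolding S_def by blast
  qed
  then obtain f where f: "\<And>n. f n \<in> D" and fb: "\<And>n. NN (\<psi> - T (f n)) < d + inverse (real (Suc n))"
    by metis
  define r where "r n = T (f n)" for n
  have rb: "NN (r m - r n) \<le> 2 * inverse (real (Suc m)) + 2 * inverse (real (Suc n))" for m n
  proof -
    define mid where "mid = (1/2) *\<^sub>C (f m + f n)"
    have midD: "mid \<in> D" unfolding mid_def using f sa_add[OF sa] sa_scale[OF sa] by blast
    have Tmid: "T mid = (1/2) *\<^sub>C (r m + r n)" unfolding mid_def r_def
      using f T_scale T_add sa_add[OF sa] by simp
    have e: "(\<psi> - r m) + (\<psi> - r n) = 2 *\<^sub>C (\<psi> - T mid)"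
      unfolding Tmid by (simp only: scaleC_diff_right half_scale, simp only: two_scale, simp add: algebra_simps)
    have "NN ((\<psi> - r m) + (\<psi> - r n)) = 4 * NN (\<psi> - T mid)"
      unfolding e NN_scale by simp
    then have "NN ((\<psi> - r m) + (\<psi> - r n)) \<ge> 4 * d" using d_le[OF midD] by simp
    moreover have "NN ((\<psi> - r m) - (\<psi> - r n)) = NN (r m - r n)"
      using cnorm_minus_commute[of "r n" "r m"] by (simp add: cnorm_sq[symmetric])
    moreover note parallelogram[of "\<psi> - r m" "\<psi> - r n"] fb[of m] fb[of n]
    ultimately show ?thesis unfolding r_def by linarith
  qed
  have cauchy_r: "\<forall>e>0. \<exists>N. \<forall>m\<ge>N. \<forall>n\<ge>N. cnorm (r m - r n) < e"
  proof (intro allI impI)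
    fix e :: real assume e: "e > 0"
    obtain N where N: "inverse (real (Suc N)) < e^2 / 4"
      using reals_Archimedean e by (metis divide_pos_pos zero_less_numeral zero_less_power)
    have "cnorm (r m - r n) < e" if "m \<ge> N" "n \<ge> N" for m n
    proof -
      have i1: "inverse (real (Suc m)) \<le> inverse (real (Suc N))" and i2: "inverse (real (Suc n)) \<le> inverse (real (Suc N))"
        using that by (simp_all add: le_imp_inverse_le)
      have "NN (r m - r n) < e^2" using rb[of m n] N i1 i2 by linarith
      then have "(cnorm (r m - r n))^2 < e^2" by (simp add: cnorm_sq)
      then show ?thesis using e by (meson abs_less_iff power2_less_imp_less less_le)
    qed
    then show "\<exists>N. \<forall>m\<ge>N. \<forall>n\<ge>N. cnorm (r m - r n) < e" by blast
  qed
  then obtain L where L: "conv r L" using complete_conv by blast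
  have az: "\<bar>Im z\<bar> > 0" using z by simp
  have cauchy_f: "\<forall>e>0. \<exists>N. \<forall>m\<ge>N. \<forall>n\<ge>N. cnorm (f m - f n) < e"
  proof (intro allI impI)
    fix e :: real assume e: "e > 0"
    obtain N where N: "\<forall>m\<ge>N. \<forall>n\<ge>N. cnorm (r m - r n) < e * \<bar>Im z\<bar>"
      using cauchy_r e az by (meson mult_pos_pos)
    have "cnorm (f m - f n) < e" if "m \<ge> N" "n \<ge> N" for m n
    proof -
      have "\<bar>Im z\<bar> * cnorm (f m - f n) \<le> cnorm (r m - r n)"
        using T_lower[of "f m - f n"] sa_diff[OF sa] f T_diff unfolding r_def by simp
      moreover have "cnorm (r m - r n) < e * \<bar>Im z\<bar>" using N that by blast
      ultimately have "\<bar>Im z\<bar> * cnorm (f m - f n) < e * \<bar>Im z\<bar>" by linarith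
      then show ?thesis using az by (simp add: mult.commute)
    qed
    then show "\<exists>N. \<forall>m\<ge>N. \<forall>n\<ge>N. cnorm (f m - f n) < e" by blast
  qed
  then obtain \<phi> where phi: "conv f \<phi>" using complete_conv by blast
  have "conv (\<lambda>n. A (f n)) (L + z *\<^sub>C \<phi>)"
    by (rule conv_cong[OF conv_add[OF L conv_scale[OF phi]]]) (simp add: r_def T_def)
  then have cl: "\<phi> \<in> D \<and> A \<phi> = L + z *\<^sub>C \<phi>" using sa_closed[OF sa f phi] by blast
  then have TL: "T \<phi> = L" by (simp add: T_def)
  define w where "w = \<psi> - L"
  have "cnorm w \<le> sqrt d"
  proof (rule LIMSEQ_le_const)
    show "(\<lambda>n. sqrt (d + inverse (real (Suc n))) + cnorm (r n - L)) \<longlonglongrightarrow> sqrt d"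
    proof -
      have "(\<lambda>n. d + inverse (real (Suc n))) \<longlonglongrightarrow> d + 0"
        by (intro tendsto_intros LIMSEQ_inverse_real_of_nat)
      then have "(\<lambda>n. sqrt (d + inverse (real (Suc n)))) \<longlonglongrightarrow> sqrt d"
        using tendsto_real_sqrt by fastforce
      from tendsto_add[OF this L[unfolded conv_def]] show ?thesis by simp
    qed
    show "\<exists>N. \<forall>n\<ge>N. cnorm w \<le> sqrt (d + inverse (real (Suc n))) + cnorm (r n - L)"
    proof (intro exI allI impI)
      fix n
      have "cnorm w \<le> cnorm (\<psi> - r n) + cnorm (r n - L)"
        unfolding w_def by (metis cnorm_triangle diff_add_cancel add_diff_eq)
      moreover have "cnorm (\<psi> - r n) \<le> sqrt (d + inverse (real (Suc n)))"
        using fb[of n] unfolding r_def cnorm_def by simp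
      ultimately show "cnorm w \<le> sqrt (d + inverse (real (Suc n))) + cnorm (r n - L)" by simp
    qed
  qed
  note cw = this
  have wd: "NN w \<le> d" using power_mono[OF cw cnorm_nonneg, of 2] cnorm_sq[of w] d_nonneg by simp
  have orth: "cinner w (T x) = 0" if x: "x \<in> D" for x
  proof -
    define c where "c = cinner w (T x)"
    define s where "s = T x"
    define t where "t = complex_of_real (inverse (NN s + 1)) * cnj c"
    have pos: "NN s + 1 > 0" using cinner_pos[of s] by linarith
    have "\<phi> + t *\<^sub>C x \<in> D" using cl x sa_add[OF sa] sa_scale[OF sa] by blast
    then have "d \<le> NN (\<psi> - T (\<phi> + t *\<^sub>C x))" by (rule d_le)
    also have "T (\<phi> + t *\<^sub>C x) = L + t *\<^sub>C s"
      using cl x T_add T_scale sa_scale[OF sa] TL s_def by simp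
    finally have "NN w \<le> NN (w - t *\<^sub>C s)" using wd by (simp add: w_def algebra_simps)
    also have "NN (w - t *\<^sub>C s) = NN w + (cmod t)^2 * NN s - 2 * Re (t * c)"
      unfolding NN_diff NN_scale by (simp only: cinner_scaleC_right c_def s_def)
    finally have h: "2 * Re (t * c) \<le> (cmod t)^2 * NN s" by simp
    define k where "k = inverse (NN s + 1)"
    have k: "k > 0" using pos by (simp add: k_def)
    have tc: "t * c = complex_of_real (k * (cmod c)^2)"
      unfolding t_def k_def by (simp add: cmod_sq_c mult.commute mult.left_commute)
    have tk: "t = complex_of_real k * cnj c" unfolding t_def k_def by simp
    have ct: "(cmod t)^2 = k^2 * (cmod c)^2" unfolding tk
      using k by (simp only: norm_mult norm_of_real complex_mod_cnj abs_of_pos power_mult_distrib)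
    have "2 * k * (cmod c)^2 \<le> k^2 * (cmod c)^2 * NN s" using h by (simp add: tc ct)
    then have "2 * (cmod c)^2 \<le> k * NN s * (cmod c)^2" using k
      by (simp add: power2_eq_square mult.commute mult.left_commute)
    moreover have "k * NN s \<le> 1" unfolding k_def using pos by (simp add: field_simps)
    then have "k * NN s * (cmod c)^2 \<le> 1 * (cmod c)^2" by (rule mult_right_mono) simp
    ultimately have "2 * (cmod c)^2 \<le> (cmod c)^2" by linarith
    then show ?thesis unfolding c_def by simp
  qed
  have wD: "w \<in> D"
  proof (rule sa_adj[OF sa, where \<eta>="cnj z *\<^sub>C w"])
    fix x assume x: "x \<in> D"
    show "cinner w (A x) = cinner (cnj z *\<^sub>C w) x"
      using orth[OF x] by (simp add: T_def cinner_simps)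
  qed
  have Aw: "A w - cnj z *\<^sub>C w = 0"
  proof (rule orth_dense[OF sa_dense[OF sa]])
    fix x assume x: "x \<in> D"
    show "cinner (A w - cnj z *\<^sub>C w) x = 0"
      using orth[OF x] sa_sym[OF sa wD x] by (simp add: T_def cinner_simps)
  qed
  have "Im (cinner w (A w)) = 0" by (rule sa_real[OF sa wD])
  moreover have "cinner w (A w) = cnj z * complex_of_real (NN w)" using Aw
    by (simp add: cinner_simps cinner_self_real[of w, symmetric])
  ultimately have "Im z * NN w = 0" by simp
  then have "NN w = 0" using z by simp
  then have "w = 0" using NN_zero_iff by blast
  then show ?thesis using cl TL unfolding w_def by auto
qed

end


lemma sa_resolvent_ex1:
  fixes A :: "'a::chilbert \<Rightarrow> 'a"
  assumes sa: "self_adjoint D A" and z: "Im z \<noteq> 0"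
  shows "\<exists>!\<phi>. \<phi> \<in> D \<and> A \<phi> - z *\<^sub>C \<phi> = \<psi>"
  using T_surj[OF sa z, of \<psi>] T_inj[OF sa z] unfolding T_def[OF sa z] by blast

lemma res_props:
  fixes A :: "'a::chilbert \<Rightarrow> 'a"
  assumes sa: "self_adjoint D A" and z: "Im z \<noteq> 0"
  shows "resolvent D A z \<psi> \<in> D \<and> A (resolvent D A z \<psi>) - z *\<^sub>C resolvent D A z \<psi> = \<psi>"
  unfolding resolvent_def by (rule theI'[OF sa_resolvent_ex1[OF sa z]])

lemma res_unique:
  fixes A :: "'a::chilbert \<Rightarrow> 'a"
  assumes sa: "self_adjoint D A" and z: "Im z \<noteq> 0" and "\<phi> \<in> D" "A \<phi> - z *\<^sub>C \<phi> = \<psi>"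
  shows "resolvent D A z \<psi> = \<phi>"
  unfolding resolvent_def using assms sa_resolvent_ex1[OF sa z] by (intro the1_equality) auto

lemma sa_A0: "self_adjoint D A \<Longrightarrow> A 0 = 0"
  using sa_diff[of D A 0 0] sa_zero[of D A] by simp

lemma res_zero:
  fixes A :: "'a::chilbert \<Rightarrow> 'a"
  assumes sa: "self_adjoint D A" and z: "Im z \<noteq> 0"
  shows "resolvent D A z 0 = 0"
  by (rule res_unique[OF sa z sa_zero[OF sa]]) (simp add: sa_A0[OF sa])

lemma cinner_triple: "cinner (a::'l::cinner_space, b::'s::cinner_space, c::'r::cinner_space) (x, y, w)
   = cinner a x + (cinner b y + cinner c w)"
  by (simp add: cinner_prod_def)

lemma scaleC_triple: "k *\<^sub>C (a::'l::cvector, b::'s::cvector, c::'r::cvector) = (k *\<^sub>C a, k *\<^sub>C b, k *\<^sub>C c)"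
  by (simp add: scaleC_prod_def)

lemma Hlamnu_eq:
  "Hlamnu Hl HS Hr \<chi>l \<chi>r \<delta>l \<delta>r lam nu (u, v, w) =
    (Hl u + (complex_of_real lam * cinner \<delta>l v) *\<^sub>C \<chi>l,
     HS v + (complex_of_real lam * cinner \<chi>l u) *\<^sub>C \<delta>l + (complex_of_real nu * cinner \<chi>r w) *\<^sub>C \<delta>r,
     Hr w + (complex_of_real nu * cinner \<delta>r v) *\<^sub>C \<chi>r)"
  by (simp add: Hlamnu_def H0op_def inl3_def ins3_def inr3_def cinner_triple scaleC_triple scaleC_scaleC)


lemma diff_helper:
  fixes a1 a2 x1 x2 y1 y2 :: "'a::ab_group_add"
  assumes "a1 + x1 - y1 = a2 + x2 - y2"
  shows "(a1 - a2) - (y1 - y2) + (x1 - x2) = 0"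
  using assms by (simp add: algebra_simps)

lemma H_inj:
  fixes Hl :: "'l::chilbert \<Rightarrow> 'l" and HS :: "'s::chilbert \<Rightarrow> 's" and Hr :: "'r::chilbert \<Rightarrow> 'r"
  assumes sl: "self_adjoint Dl Hl" and ss: "self_adjoint DS HS" and sr: "self_adjoint Dr Hr"
    and z: "Im z \<noteq> 0"
    and d1: "(u1, v1, w1) \<in> dom0 Dl DS Dr" and d2: "(u2, v2, w2) \<in> dom0 Dl DS Dr"
    and e: "Hlamnu Hl HS Hr \<chi>l \<chi>r \<delta>l \<delta>r lam nu (u1, v1, w1) - z *\<^sub>C (u1, v1, w1)
          = Hlamnu Hl HS Hr \<chi>l \<chi>r \<delta>l \<delta>r lam nu (u2, v2, w2) - z *\<^sub>C (u2, v2, w2)"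
  shows "(u1, v1, w1) = (u2, v2, w2)"
proof -
  define L where "L = complex_of_real lam"
  define M where "M = complex_of_real nu"
  define u where "u = u1 - u2"
  define v where "v = v1 - v2"
  define w where "w = w1 - w2"
  from d1 d2 have D: "u1 \<in> Dl" "u2 \<in> Dl" "v1 \<in> DS" "v2 \<in> DS" "w1 \<in> Dr" "w2 \<in> Dr"
    by (auto simp: dom0_def)
  have uD: "u \<in> Dl" and Hu: "Hl u = Hl u1 - Hl u2" using sa_diff[OF sl D(1,2)] u_def by auto
  have vD: "v \<in> DS" and Hv: "HS v = HS v1 - HS v2" using sa_diff[OF ss D(3,4)] v_def by auto
  have wD: "w \<in> Dr" and Hw: "Hr w = Hr w1 - Hr w2" using sa_diff[OF sr D(5,6)] w_def by auto
  from e have e1: "Hl u1 + (L * cinner \<delta>l v1) *\<^sub>C \<chi>l - z *\<^sub>C u1 = Hl u2 + (L * cinner \<delta>l v2) *\<^sub>C \<chi>l - z *\<^sub>C u2"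
    and e2: "HS v1 + ((L * cinner \<chi>l u1) *\<^sub>C \<delta>l + (M * cinner \<chi>r w1) *\<^sub>C \<delta>r) - z *\<^sub>C v1
           = HS v2 + ((L * cinner \<chi>l u2) *\<^sub>C \<delta>l + (M * cinner \<chi>r w2) *\<^sub>C \<delta>r) - z *\<^sub>C v2"
    and e3: "Hr w1 + (M * cinner \<delta>r v1) *\<^sub>C \<chi>r - z *\<^sub>C w1 = Hr w2 + (M * cinner \<delta>r v2) *\<^sub>C \<chi>r - z *\<^sub>C w2"
    by (simp_all add: Hlamnu_eq scaleC_triple L_def M_def add.assoc)
  have f1: "Hl u - z *\<^sub>C u + (L * cinner \<delta>l v) *\<^sub>C \<chi>l = 0"
    unfolding Hu using diff_helper[OF e1] by (simp add: u_def v_def scaleC_diff_right cinner_diff_right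
        right_diff_distrib scaleC_diff_left)
  have f2: "HS v - z *\<^sub>C v + ((L * cinner \<chi>l u) *\<^sub>C \<delta>l + (M * cinner \<chi>r w) *\<^sub>C \<delta>r) = 0"
    unfolding Hv using diff_helper[OF e2] by (simp add: u_def v_def w_def scaleC_diff_right cinner_diff_right
        right_diff_distrib scaleC_diff_left algebra_simps)
  have f3: "Hr w - z *\<^sub>C w + (M * cinner \<delta>r v) *\<^sub>C \<chi>r = 0"
    unfolding Hw using diff_helper[OF e3] by (simp add: w_def v_def scaleC_diff_right cinner_diff_right
        right_diff_distrib scaleC_diff_left)
  have g1: "cinner u (Hl u) - z * complex_of_real (NN u) + L * cinner \<delta>l v * cnj (cinner \<chi>l u) = 0"
    using arg_cong[OF f1, of "cinner u"] cinner_conj_sym[of u \<chi>l]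
    by (simp add: cinner_simps cinner_self_real[of u, symmetric])
  have g2: "cinner v (HS v) - z * complex_of_real (NN v) + (L * cinner \<chi>l u * cnj (cinner \<delta>l v)
       + M * cinner \<chi>r w * cnj (cinner \<delta>r v)) = 0"
    using arg_cong[OF f2, of "cinner v"] cinner_conj_sym[of v \<delta>l] cinner_conj_sym[of v \<delta>r]
    by (simp add: cinner_simps cinner_self_real[of v, symmetric])
  have g3: "cinner w (Hr w) - z * complex_of_real (NN w) + M * cinner \<delta>r v * cnj (cinner \<chi>r w) = 0"
    using arg_cong[OF f3, of "cinner w"] cinner_conj_sym[of w \<chi>r]
    by (simp add: cinner_simps cinner_self_real[of w, symmetric])
  have "Im (cinner u (Hl u)) = 0" "Im (cinner v (HS v)) = 0" "Im (cinner w (Hr w)) = 0"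
    using sa_real[OF sl uD] sa_real[OF ss vD] sa_real[OF sr wD] by auto
  then have "Im z * (NN u + NN v + NN w) = 0"
    using arg_cong[OF g1, of Im] arg_cong[OF g2, of Im] arg_cong[OF g3, of Im]
    by (simp add: L_def M_def algebra_simps)
  then have "NN u + NN v + NN w = 0" using z by simp
  then have "NN u = 0" "NN v = 0" "NN w = 0" using cinner_pos[of u] cinner_pos[of v] cinner_pos[of w] by linarith+
  then show ?thesis using NN_zero_iff u_def v_def w_def by (metis eq_iff_diff_eq_0)
qed


lemma res_H:
  fixes Hl :: "'l::chilbert \<Rightarrow> 'l" and HS :: "'s::chilbert \<Rightarrow> 's" and Hr :: "'r::chilbert \<Rightarrow> 'r"
  assumes sl: "self_adjoint Dl Hl" and ss: "self_adjoint DS HS" and sr: "self_adjoint Dr Hr"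
    and z: "Im z \<noteq> 0"
    and d: "\<phi> \<in> dom0 Dl DS Dr"
    and e: "Hlamnu Hl HS Hr \<chi>l \<chi>r \<delta>l \<delta>r lam nu \<phi> - z *\<^sub>C \<phi> = \<psi>"
  shows "resolvent (dom0 Dl DS Dr) (Hlamnu Hl HS Hr \<chi>l \<chi>r \<delta>l \<delta>r lam nu) z \<psi> = \<phi>"
  unfolding resolvent_def
proof (rule the_equality)
  show "\<phi> \<in> dom0 Dl DS Dr \<and> Hlamnu Hl HS Hr \<chi>l \<chi>r \<delta>l \<delta>r lam nu \<phi> - z *\<^sub>C \<phi> = \<psi>" using d e by simp
next
  fix \<phi>' assume h: "\<phi>' \<in> dom0 Dl DS Dr \<and> Hlamnu Hl HS Hr \<chi>l \<chi>r \<delta>l \<delta>r lam nu \<phi>' - z *\<^sub>C \<phi>' = \<psi>"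
  obtain u1 v1 w1 where p1: "\<phi>' = (u1, v1, w1)" by (cases \<phi>') auto
  obtain u2 v2 w2 where p2: "\<phi> = (u2, v2, w2)" by (cases \<phi>) auto
  have "(u1, v1, w1) = (u2, v2, w2)"
    by (rule H_inj[OF sl ss sr z, where \<chi>l=\<chi>l and \<chi>r=\<chi>r and \<delta>l=\<delta>l and \<delta>r=\<delta>r and lam=lam and nu=nu])
      (use h d e p1 p2 in auto)
  then show "\<phi>' = \<phi>" using p1 p2 by simp
qed

lemma res_comp:
  fixes A :: "'a::chilbert \<Rightarrow> 'a"
  assumes sa: "self_adjoint D A" and z: "Im z \<noteq> 0"
  shows "resolvent D A z x \<in> D" "A (resolvent D A z x) = x + z *\<^sub>C resolvent D A z x"
  using res_props[OF sa z, of x] by (auto simp: algebra_simps)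

lemma construct:
  fixes Hl :: "'l::chilbert \<Rightarrow> 'l" and HS :: "'s::chilbert \<Rightarrow> 's" and Hr :: "'r::chilbert \<Rightarrow> 'r"
    and lam nu :: real and \<chi>l :: 'l and \<chi>r :: 'r and \<delta>l \<delta>r \<psi>2 :: 's and \<psi>1 :: 'l and \<psi>3 :: 'r
    and b d :: complex
    and L M Rl RS Rr gl gr sll slr srl srr p1 p2 p3 p4 a c
  assumes sl: "self_adjoint Dl Hl" and ss: "self_adjoint DS HS" and sr: "self_adjoint Dr Hr"
    and z: "Im z \<noteq> 0"
  assumes L_def: "L = complex_of_real lam" and M_def: "M = complex_of_real nu"
  assumes Rl_def: "Rl = resolvent Dl Hl z" and RS_def: "RS = resolvent DS HS z" and Rr_def: "Rr = resolvent Dr Hr z"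
  assumes gl_def: "gl = cinner \<chi>l (Rl \<chi>l)" and gr_def: "gr = cinner \<chi>r (Rr \<chi>r)"
    and sll_def: "sll = cinner \<delta>l (RS \<delta>l)" and slr_def: "slr = cinner \<delta>l (RS \<delta>r)"
    and srl_def: "srl = cinner \<delta>r (RS \<delta>l)" and srr_def: "srr = cinner \<delta>r (RS \<delta>r)"
  assumes p1_def: "p1 = cinner \<chi>l (Rl \<psi>1)" and p2_def: "p2 = cinner \<delta>l (RS \<psi>2)"
    and p3_def: "p3 = cinner \<chi>r (Rr \<psi>3)" and p4_def: "p4 = cinner \<delta>r (RS \<psi>2)"
  assumes eq1: "(1 - L^2 * gl * sll) * b - M^2 * gr * slr * d = p2 - L * sll * p1 - M * slr * p3"
    and eq2: "(- (L^2 * gl * srl * b)) + (1 - M^2 * gr * srr) * d = p4 - L * srl * p1 - M * srr * p3"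
  assumes a_def: "a = p1 - L * gl * b" and c_def: "c = p3 - M * gr * d"
  shows "resolvent (dom0 Dl DS Dr) (Hlamnu Hl HS Hr \<chi>l \<chi>r \<delta>l \<delta>r lam nu) z (\<psi>1, \<psi>2, \<psi>3)
     = (Rl \<psi>1 - (L * b) *\<^sub>C Rl \<chi>l, RS \<psi>2 - (L * a) *\<^sub>C RS \<delta>l - (M * c) *\<^sub>C RS \<delta>r,
        Rr \<psi>3 - (M * d) *\<^sub>C Rr \<chi>r)"
    and "cinner \<chi>l (Rl \<psi>1 - (L * b) *\<^sub>C Rl \<chi>l) = a"
    and "cinner \<delta>l (RS \<psi>2 - (L * a) *\<^sub>C RS \<delta>l - (M * c) *\<^sub>C RS \<delta>r) = b"
    and "cinner \<chi>r (Rr \<psi>3 - (M * d) *\<^sub>C Rr \<chi>r) = c"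
    and "cinner \<delta>r (RS \<psi>2 - (L * a) *\<^sub>C RS \<delta>l - (M * c) *\<^sub>C RS \<delta>r) = d"
proof -
  show ia: "cinner \<chi>l (Rl \<psi>1 - (L * b) *\<^sub>C Rl \<chi>l) = a"
    by (simp add: cinner_simps a_def p1_def gl_def algebra_simps)
  show ic: "cinner \<chi>r (Rr \<psi>3 - (M * d) *\<^sub>C Rr \<chi>r) = c"
    by (simp add: cinner_simps c_def p3_def gr_def algebra_simps)
  have "p2 - L * a * sll - M * c * slr = b"
    using eq1 unfolding a_def c_def by (simp add: algebra_simps power2_eq_square)
  then show ib: "cinner \<delta>l (RS \<psi>2 - (L * a) *\<^sub>C RS \<delta>l - (M * c) *\<^sub>C RS \<delta>r) = b"
    by (simp add: cinner_simps p2_def sll_def slr_def algebra_simps)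
  have "p4 - L * a * srl - M * c * srr = d"
    using eq2 unfolding a_def c_def by (simp add: algebra_simps power2_eq_square)
  then show id: "cinner \<delta>r (RS \<psi>2 - (L * a) *\<^sub>C RS \<delta>l - (M * c) *\<^sub>C RS \<delta>r) = d"
    by (simp add: cinner_simps p4_def srl_def srr_def algebra_simps)
  note l = res_comp[OF sl z, folded Rl_def] and s = res_comp[OF ss z, folded RS_def]
    and r = res_comp[OF sr z, folded Rr_def]
  have m1: "Rl \<psi>1 - (L * b) *\<^sub>C Rl \<chi>l \<in> Dl \<and> Hl (Rl \<psi>1 - (L * b) *\<^sub>C Rl \<chi>l) = Hl (Rl \<psi>1) - (L * b) *\<^sub>C Hl (Rl \<chi>l)"
    using sa_diff[OF sl] sa_scale[OF sl] l by metis
  have m3: "Rr \<psi>3 - (M * d) *\<^sub>C Rr \<chi>r \<in> Dr \<and> Hr (Rr \<psi>3 - (M * d) *\<^sub>C Rr \<chi>r) = Hr (Rr \<psi>3) - (M * d) *\<^sub>C Hr (Rr \<chi>r)"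
    using sa_diff[OF sr] sa_scale[OF sr] r by metis
  have m2a: "RS \<psi>2 - (L * a) *\<^sub>C RS \<delta>l \<in> DS \<and> HS (RS \<psi>2 - (L * a) *\<^sub>C RS \<delta>l) = HS (RS \<psi>2) - (L * a) *\<^sub>C HS (RS \<delta>l)"
    using sa_diff[OF ss] sa_scale[OF ss] s by metis
  have m2: "RS \<psi>2 - (L * a) *\<^sub>C RS \<delta>l - (M * c) *\<^sub>C RS \<delta>r \<in> DS \<and> HS (RS \<psi>2 - (L * a) *\<^sub>C RS \<delta>l - (M * c) *\<^sub>C RS \<delta>r) = HS (RS \<psi>2) - (L * a) *\<^sub>C HS (RS \<delta>l) - (M * c) *\<^sub>C HS (RS \<delta>r)"
    using sa_diff[OF ss] sa_scale[OF ss] s m2a by metis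
  show "resolvent (dom0 Dl DS Dr) (Hlamnu Hl HS Hr \<chi>l \<chi>r \<delta>l \<delta>r lam nu) z (\<psi>1, \<psi>2, \<psi>3)
     = (Rl \<psi>1 - (L * b) *\<^sub>C Rl \<chi>l, RS \<psi>2 - (L * a) *\<^sub>C RS \<delta>l - (M * c) *\<^sub>C RS \<delta>r,
        Rr \<psi>3 - (M * d) *\<^sub>C Rr \<chi>r)"
  proof (rule res_H[OF sl ss sr z])
    show "(Rl \<psi>1 - (L * b) *\<^sub>C Rl \<chi>l, RS \<psi>2 - (L * a) *\<^sub>C RS \<delta>l - (M * c) *\<^sub>C RS \<delta>r,
        Rr \<psi>3 - (M * d) *\<^sub>C Rr \<chi>r) \<in> dom0 Dl DS Dr" using m1 m2 m3 by (simp add: dom0_def)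
    show "Hlamnu Hl HS Hr \<chi>l \<chi>r \<delta>l \<delta>r lam nu (Rl \<psi>1 - (L * b) *\<^sub>C Rl \<chi>l, RS \<psi>2 - (L * a) *\<^sub>C RS \<delta>l - (M * c) *\<^sub>C RS \<delta>r,
        Rr \<psi>3 - (M * d) *\<^sub>C Rr \<chi>r) - z *\<^sub>C (Rl \<psi>1 - (L * b) *\<^sub>C Rl \<chi>l, RS \<psi>2 - (L * a) *\<^sub>C RS \<delta>l - (M * c) *\<^sub>C RS \<delta>r,
        Rr \<psi>3 - (M * d) *\<^sub>C Rr \<chi>r) = (\<psi>1, \<psi>2, \<psi>3)"
      unfolding Hlamnu_eq scaleC_triple L_def[symmetric] M_def[symmetric]
      using m1 m2 m3 l(2) s(2) r(2) ia ib ic id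
      by (simp add: scaleC_add_right scaleC_diff_right scaleC_scaleC mult.commute algebra_simps)
  qed
qed


lemma lin_div:
  fixes X Y N1 N2 K D :: complex
  assumes "D \<noteq> 0" "X * N1 + Y * N2 = K * D"
  shows "X * (N1 / D) + Y * (N2 / D) = K"
proof -
  have "X * (N1 / D) + Y * (N2 / D) = (X * N1 + Y * N2) / D" by (simp add: add_divide_distrib)
  then show ?thesis using assms by simp
qed

lemma kernel2:
  fixes p q r s :: complex
  assumes "p * s - q * r = 0"
  shows "\<exists>b d. (b \<noteq> 0 \<or> d \<noteq> 0) \<and> p * b + q * d = 0 \<and> r * b + s * d = 0"
proof (cases "p \<noteq> 0 \<or> q \<noteq> 0")
  case True
  then show ?thesis using assms by (intro exI[of _ q] exI[of _ "-p"]) (auto simp: algebra_simps)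
next
  case False
  show ?thesis
  proof (cases "r \<noteq> 0 \<or> s \<noteq> 0")
    case True
    then show ?thesis using False by (intro exI[of _ s] exI[of _ "-r"]) (auto simp: algebra_simps)
  next
    case F2: False
    then show ?thesis using False by (intro exI[of _ 1] exI[of _ 0]) auto
  qed
qed

theorem lemma2p1:
  fixes Hl :: "'l::chilbert \<Rightarrow> 'l" and Dl :: "'l set"
    and HS :: "'s::chilbert \<Rightarrow> 's" and DS :: "'s set"
    and Hr :: "'r::chilbert \<Rightarrow> 'r" and Dr :: "'r set"
    and \<chi>l :: 'l and \<chi>r :: 'r and \<delta>l \<delta>r :: 's
    and lam nu :: real and z :: complex
  assumes "finite_dimensional TYPE('s)"
    and "self_adjoint Dl Hl" and "self_adjoint DS HS" and "self_adjoint Dr Hr"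
    and "\<chi>l \<noteq> 0" and "\<chi>r \<noteq> 0" and "\<delta>l \<noteq> 0" and "\<delta>r \<noteq> 0"
    and "Im z \<noteq> 0"
  defines "G \<equiv> (%a b \<phi> \<psi> w. green (dom0 Dl DS Dr) (Hlamnu Hl HS Hr \<chi>l \<chi>r \<delta>l \<delta>r a b) \<phi> \<psi> w)"
  defines "G0 \<equiv> G 0 0"
  defines "D \<equiv> (1 - (complex_of_real nu)\<^sup>2 * G0 (inr3 \<chi>r) (inr3 \<chi>r) z * G0 (ins3 \<delta>r) (ins3 \<delta>r) z)
                * (1 - (complex_of_real lam)\<^sup>2 * G0 (inl3 \<chi>l) (inl3 \<chi>l) z * G0 (ins3 \<delta>l) (ins3 \<delta>l) z)
              - (complex_of_real nu)\<^sup>2 * (complex_of_real lam)\<^sup>2 * G0 (inr3 \<chi>r) (inr3 \<chi>r) z * G0 (inl3 \<chi>l) (inl3 \<chi>l) z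
                * G0 (ins3 \<delta>l) (ins3 \<delta>r) z * G0 (ins3 \<delta>r) (ins3 \<delta>l) z"
  shows "G lam nu (ins3 \<delta>l) (ins3 \<delta>l) z =
           ((1::complex) / D) * ((1 - (complex_of_real nu)\<^sup>2 * G0 (inr3 \<chi>r) (inr3 \<chi>r) z * G0 (ins3 \<delta>r) (ins3 \<delta>r) z)
                        * G0 (ins3 \<delta>l) (ins3 \<delta>l) z
                      + (complex_of_real nu)\<^sup>2 * G0 (inr3 \<chi>r) (inr3 \<chi>r) z * G0 (ins3 \<delta>l) (ins3 \<delta>r) z
                        * G0 (ins3 \<delta>r) (ins3 \<delta>l) z)
         \<and> G lam nu (inl3 \<chi>l) (inl3 \<chi>l) z =
           ((1::complex) / D) * (G0 (inl3 \<chi>l) (inl3 \<chi>l) z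
                      * (1 - (complex_of_real nu)\<^sup>2 * G0 (inr3 \<chi>r) (inr3 \<chi>r) z * G0 (ins3 \<delta>r) (ins3 \<delta>r) z))"
proof -
  note sl = assms(2) and ss = assms(3) and sr = assms(4) and z = assms(9)
  define L where "L = complex_of_real lam"
  define M where "M = complex_of_real nu"
  define Rl where "Rl = resolvent Dl Hl z"
  define RS where "RS = resolvent DS HS z"
  define Rr where "Rr = resolvent Dr Hr z"
  define gl where "gl = cinner \<chi>l (Rl \<chi>l)"
  define gr where "gr = cinner \<chi>r (Rr \<chi>r)"
  define sll where "sll = cinner \<delta>l (RS \<delta>l)"
  define slr where "slr = cinner \<delta>l (RS \<delta>r)"
  define srl where "srl = cinner \<delta>r (RS \<delta>l)"
  define srr where "srr = cinner \<delta>r (RS \<delta>r)"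
  have Rl0: "Rl 0 = 0" unfolding Rl_def by (rule res_zero[OF sl z])
  have RS0: "RS 0 = 0" unfolding RS_def by (rule res_zero[OF ss z])
  have Rr0: "Rr 0 = 0" unfolding Rr_def by (rule res_zero[OF sr z])
  have R0: "resolvent (dom0 Dl DS Dr) (Hlamnu Hl HS Hr \<chi>l \<chi>r \<delta>l \<delta>r 0 0) z (x, y, w) = (Rl x, RS y, Rr w)"
    for x y w
    apply (rule res_H[OF sl ss sr z])
    using res_props[OF sl z, of x] res_props[OF ss z, of y] res_props[OF sr z, of w]
    by (auto simp: dom0_def Hlamnu_eq scaleC_triple Rl_def RS_def Rr_def)
  have g: "G0 (inl3 \<chi>l) (inl3 \<chi>l) z = gl" "G0 (inr3 \<chi>r) (inr3 \<chi>r) z = gr"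
    "G0 (ins3 \<delta>l) (ins3 \<delta>l) z = sll" "G0 (ins3 \<delta>l) (ins3 \<delta>r) z = slr"
    "G0 (ins3 \<delta>r) (ins3 \<delta>l) z = srl" "G0 (ins3 \<delta>r) (ins3 \<delta>r) z = srr"
    by (simp_all add: G0_def G_def green_def inl3_def ins3_def inr3_def R0 cinner_triple Rl0 RS0 Rr0
        gl_def gr_def sll_def slr_def srl_def srr_def)
  have Deq: "D = (1 - M^2*gr*srr) * (1 - L^2*gl*sll) - M^2*L^2*gr*gl*slr*srl"
    unfolding D_def g L_def M_def by simp
  note C = construct[OF sl ss sr z L_def M_def Rl_def RS_def Rr_def gl_def gr_def sll_def slr_def srl_def srr_def
      refl refl refl refl]
  have Dnz: "D \<noteq> 0"
  proof
    assume D0: "D = 0"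
    obtain b d where bd: "b \<noteq> 0 \<or> d \<noteq> 0" "(1 - L^2*gl*sll) * b + (- (M^2*gr*slr)) * d = 0"
      "(- (L^2*gl*srl)) * b + (1 - M^2*gr*srr) * d = 0"
      using kernel2[of "1 - L^2*gl*sll" "1 - M^2*gr*srr" "- (M^2*gr*slr)" "- (L^2*gl*srl)"] D0
      unfolding Deq by (auto simp: algebra_simps)
    have e1: "(1 - L^2 * gl * sll) * b - M^2 * gr * slr * d
        = cinner \<delta>l (RS 0) - L * sll * cinner \<chi>l (Rl 0) - M * slr * cinner \<chi>r (Rr 0)"
      using bd(2) by (simp add: RS0 Rl0 Rr0 algebra_simps)
    have e2: "(- (L^2 * gl * srl * b)) + (1 - M^2 * gr * srr) * d
        = cinner \<delta>r (RS 0) - L * srl * cinner \<chi>l (Rl 0) - M * srr * cinner \<chi>r (Rr 0)"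
      using bd(3) by (simp add: RS0 Rl0 Rr0 algebra_simps)
    note C0 = C[OF e1 e2 refl refl]
    have "resolvent (dom0 Dl DS Dr) (Hlamnu Hl HS Hr \<chi>l \<chi>r \<delta>l \<delta>r lam nu) z (0, 0, 0) = (0, 0, 0)"
      by (rule res_H[OF sl ss sr z])
        (simp_all add: dom0_def sa_zero[OF sl] sa_zero[OF ss] sa_zero[OF sr] Hlamnu_eq
          sa_A0[OF sl] sa_A0[OF ss] sa_A0[OF sr] scaleC_triple zero_prod_def)
    then have "b = 0" "d = 0" using C0(1) C0(3) C0(5) by auto
    then show False using bd(1) by simp
  qed
  define b1 where "b1 = ((1 - M^2*gr*srr)*sll + M^2*gr*slr*srl) / D"
  define d1 where "d1 = ((1 - L^2*gl*sll)*srl + L^2*gl*srl*sll) / D"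
  have e1: "(1 - L^2 * gl * sll) * b1 - M^2 * gr * slr * d1
        = cinner \<delta>l (RS \<delta>l) - L * sll * cinner \<chi>l (Rl 0) - M * slr * cinner \<chi>r (Rr 0)"
  proof -
    have "(1 - L^2 * gl * sll) * b1 + (- (M^2 * gr * slr)) * d1 = sll"
      unfolding b1_def d1_def by (rule lin_div[OF Dnz]) (unfold Deq, simp add: algebra_simps)
    then show ?thesis unfolding sll_def[symmetric] by (simp add: Rl0 Rr0)
  qed
  have e2: "(- (L^2 * gl * srl * b1)) + (1 - M^2 * gr * srr) * d1
        = cinner \<delta>r (RS \<delta>l) - L * srl * cinner \<chi>l (Rl 0) - M * srr * cinner \<chi>r (Rr 0)"
  proof -
    have "(- (L^2 * gl * srl)) * b1 + (1 - M^2 * gr * srr) * d1 = srl"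
      unfolding b1_def d1_def by (rule lin_div[OF Dnz]) (unfold Deq, simp add: algebra_simps)
    then show ?thesis unfolding srl_def[symmetric] by (simp add: Rl0 Rr0)
  qed
  note C1 = C[OF e1 e2 refl refl]
  have G1: "G lam nu (ins3 \<delta>l) (ins3 \<delta>l) z = b1"
    unfolding G_def green_def ins3_def using C1(1) C1(3) by (simp add: cinner_triple)
  define b2 where "b2 = ((1 - M^2*gr*srr)*(- (L*sll*gl)) + M^2*gr*slr*(- (L*srl*gl))) / D"
  define d2 where "d2 = ((1 - L^2*gl*sll)*(- (L*srl*gl)) + L^2*gl*srl*(- (L*sll*gl))) / D"
  have e3: "(1 - L^2 * gl * sll) * b2 - M^2 * gr * slr * d2
        = cinner \<delta>l (RS 0) - L * sll * cinner \<chi>l (Rl \<chi>l) - M * slr * cinner \<chi>r (Rr 0)"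
  proof -
    have "(1 - L^2 * gl * sll) * b2 + (- (M^2 * gr * slr)) * d2 = - (L * sll * gl)"
      unfolding b2_def d2_def by (rule lin_div[OF Dnz]) (unfold Deq, simp add: algebra_simps)
    then show ?thesis unfolding gl_def[symmetric] by (simp add: RS0 Rr0)
  qed
  have e4: "(- (L^2 * gl * srl * b2)) + (1 - M^2 * gr * srr) * d2
        = cinner \<delta>r (RS 0) - L * srl * cinner \<chi>l (Rl \<chi>l) - M * srr * cinner \<chi>r (Rr 0)"
  proof -
    have "(- (L^2 * gl * srl)) * b2 + (1 - M^2 * gr * srr) * d2 = - (L * srl * gl)"
      unfolding b2_def d2_def by (rule lin_div[OF Dnz]) (unfold Deq, simp add: algebra_simps)
    then show ?thesis unfolding gl_def[symmetric] by (simp add: RS0 Rr0)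
  qed
  note C2 = C[OF e3 e4 refl refl]
  have G2: "G lam nu (inl3 \<chi>l) (inl3 \<chi>l) z = gl - L * gl * b2"
    unfolding G_def green_def inl3_def using C2(1) C2(2) by (simp add: cinner_triple gl_def)
  have f1: "b1 = (1 / D) * ((1 - M^2*gr*srr) * sll + M^2*gr*slr*srl)"
    unfolding b1_def by simp
  have "gl * D - L * gl * ((1 - M^2*gr*srr)*(- (L*sll*gl)) + M^2*gr*slr*(- (L*srl*gl)))
      = gl * (1 - M^2*gr*srr)"
    unfolding Deq by (simp add: algebra_simps power2_eq_square)
  then have f2: "gl - L * gl * b2 = (1 / D) * (gl * (1 - M^2*gr*srr))"
    using Dnz unfolding b2_def by (simp add: field_simps)
  show ?thesis unfolding G1 G2 f1 f2 g L_def[symmetric] M_def[symmetric] by simp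
qed

end
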